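(* Let $S_{r,N}$ be a nontrivial atomic exponential Puiseux semiring. For $x\in S_{r,N}$ and $m\in\mathbb{N}$ let $R_x(r^{s_m})=\mathsf{Z}(x)\cap(r^{s_m}+\mathsf{Z}(S_{r,N}))$ (the factorizations of $x$ in which the atom $r^{s_m}$ occurs). Then: (1) $\mathrm{Betti}(S_{r,N})=\{\mathsf{n}(r)^{\delta_n}r^{s_n}: n\in\mathbb{N}\}$; (2) if $x=\mathsf{n}(r)^{\delta_n}r^{s_n}$ for some $n\in\mathbb{N}$, then the set of $\mathcal{R}$-classes of $\mathsf{Z}(x)$ is exactly $\{R_x(r^{s_n}),R_x(r^{s_{n+1}})\}$.
   Context: $\mathbb{N}=\{0,1,2,\dots\}$. A numerical monoid $N$ is an additive submonoid of $\mathbb{N}$ with finite complement in $\mathbb{N}$. For $r\in\mathbb{Q}_{>0}$ write $r=\mathsf{n}(r)/\mathsf{d}(r)$ in lowest terms. The exponential Puiseux semiring $S_{r,N}$ is the additive submonoid of $\mathbb{Q}_{\ge0}$ generated by $\{r^k:k\in N\}$; it is nontrivial if $r\notin\mathbb{N}$, and then it is atomic iff $\mathsf{n}(r)>1$, with atoms $r^s$, $s\in N$. Let $s_0<s_1<\cdots$ be the elements of $N$ in increasing order and $\delta_n=s_{n+1}-s_n$. For an atomic monoid $M$, $\mathsf{Z}(M)$ is the free commutative monoid on the atoms, $\pi:\mathsf{Z}(M)\to M$ the evaluation homomorphism, $\mathsf{Z}(x)=\pi^{-1}(x)$. For factorizations $z=\sum\alpha_a a$, $z'=\sum\beta_a a$,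 $\gcd(z,z')=\sum\min(\alpha_a,\beta_a)a$. Two factorizations $z,z'\in\mathsf{Z}(x)$ are $\mathcal{R}$-related if there is a chain $z=z_1,\dots,z_n=z'$ in $\mathsf{Z}(x)$ with $\gcd(z_i,z_{i+1})$ nonzero (nonempty) for all $i$. An element $x$ is a Betti element if $\mathsf{Z}(x)$ has more than one $\mathcal{R}$-class; $\mathrm{Betti}(M)$ is the set of Betti elements. *)

theory Defs
  imports Complex_Main "HOL-Library.Multiset" "HOL-Library.Infinite_Set"
begin

definition numerical_monoid :: "nat set \<Rightarrow> bool" where
  "numerical_monoid N \<longleftrightarrow> 0 \<in> N \<and> (\<forall>a\<in>N. \<forall>b\<in>N. a + b \<in> N) \<and> finite (UNIV - N)"

definition numer :: "rat \<Rightarrow> int" where "numer r = fst (quotient_of r)"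
definition denom :: "rat \<Rightarrow> int" where "denom r = snd (quotient_of r)"

definition exp_puiseux :: "rat \<Rightarrow> nat set \<Rightarrow> rat set" where
  "exp_puiseux r N = {sum_mset z | z. set_mset z \<subseteq> (\<lambda>k. r ^ k) ` N}"

definition atoms :: "rat set \<Rightarrow> rat set" where
  "atoms M = {a \<in> M. a \<noteq> 0 \<and> (\<forall>b\<in>M. \<forall>c\<in>M. a = b + c \<longrightarrow> b = 0 \<or> c = 0)}"

definition factorization_monoid :: "rat set \<Rightarrow> rat multiset set" where
  "factorization_monoid M = {z. set_mset z \<subseteq> atoms M}"

definition factorizations :: "rat set \<Rightarrow> rat \<Rightarrow> rat multiset set" where
  "factorizations M x = {z \<in> factorization_monoid M. sum_mset z = x}"

definition R_step :: "rat set \<Rightarrow> rat \<Rightarrow> (rat multiset \<times> rat multiset) set" where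
  "R_step M x = {(z, z'). z \<in> factorizations M x \<and> z' \<in> factorizations M x \<and> z \<inter># z' \<noteq> {#}}"

definition R_related :: "rat set \<Rightarrow> rat \<Rightarrow> rat multiset \<Rightarrow> rat multiset \<Rightarrow> bool" where
  "R_related M x z z' \<longleftrightarrow> z \<in> factorizations M x \<and> z' \<in> factorizations M x \<and> (z, z') \<in> (R_step M x)\<^sup>*"

definition R_class :: "rat set \<Rightarrow> rat \<Rightarrow> rat multiset \<Rightarrow> rat multiset set" where
  "R_class M x z = {z'. R_related M x z z'}"

definition R_classes :: "rat set \<Rightarrow> rat \<Rightarrow> rat multiset set set" where
  "R_classes M x = R_class M x ` factorizations M x"

definition Betti :: "rat set \<Rightarrow> rat set" where
  "Betti M = {x \<in> M. \<exists>C1\<in>R_classes M x. \<exists>C2\<in>R_classes M x. C1 \<noteq> C2}"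

definition R_atom :: "rat set \<Rightarrow> rat \<Rightarrow> rat \<Rightarrow> rat multiset set" where
  "R_atom M x a = factorizations M x \<inter> {add_mset a w | w. w \<in> factorization_monoid M}"

end

theory Submission imports Defs begin

locale eps =
  fixes r :: rat and N :: "nat set"
  assumes nm: "numerical_monoid N" and rpos: "r > 0" and rnat: "r \<notin> \<nat>" and num: "numer r > 1"
begin

abbreviation aa where "aa \<equiv> numer r"
abbreviation bb where "bb \<equiv> denom r"
abbreviation s where "s \<equiv> enumerate N"
abbreviation M where "M \<equiv> exp_puiseux r N"
abbreviation img :: "nat multiset \<Rightarrow> rat multiset" where "img E \<equiv> image_mset (\<lambda>t. r ^ t) E"
abbreviation val :: "nat multiset \<Rightarrow> rat" where "val E \<equiv> sum_mset (img E)"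
abbreviation ival :: "nat \<Rightarrow> nat multiset \<Rightarrow> int" where
  "ival K E \<equiv> sum_mset (image_mset (\<lambda>t. aa ^ t * bb ^ (K - t)) E)"
abbreviation xx where "xx n \<equiv> of_int aa ^ (s (Suc n) - s n) * r ^ s n"

lemma r_eq: "r = of_int aa / of_int bb"
  using quotient_of_div[of r "aa" "bb"] by (simp add: numer_def denom_def)

lemma b_pos: "bb > 0"
  using quotient_of_denom_pos'[of r] by (simp add: denom_def)

lemma ab_coprime: "coprime aa bb"
  using quotient_of_coprime[of r "aa" "bb"] by (simp add: numer_def denom_def)

lemma a_gt1: "aa > 1" using num .

lemma b_gt1: "bb > 1"
proof (rule ccontr)
  assume "\<not> bb > 1"
  with b_pos have "bb = 1" by simp
  hence "r = of_int aa" using r_eq by simp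
  also have "\<dots> = of_nat (nat aa)" using a_gt1 by simp
  finally have "r \<in> \<nat>" by (metis of_nat_in_Nats)
  with rnat show False by simp
qed

lemma r_ne1: "r \<noteq> 1"
  using rnat by auto

lemma r_inj: "r ^ t = r ^ u \<longleftrightarrow> t = u"
  using power_inject_exp'[OF r_ne1 rpos] .

lemma N_inf: "infinite N"
proof
  assume "finite N"
  moreover have "finite (UNIV - N)" using nm by (simp add: numerical_monoid_def)
  ultimately have "finite (N \<union> (UNIV - N))" by simp
  thus False by simp
qed

lemma s_in: "s n \<in> N" using enumerate_in_set N_inf by blast

lemma s_mono: "strict_mono s" using strict_mono_enumerate N_inf by blast

lemma s_less: "m < n \<Longrightarrow> s m < s n" using s_mono by (simp add: strict_mono_less)
lemma s_le: "s m \<le> s n \<longleftrightarrow> m \<le> n" using s_mono by (simp add: strict_mono_less_eq)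

lemma s_0: "s 0 = 0"
proof -
  have "0 \<in> N" using nm by (simp add: numerical_monoid_def)
  thus ?thesis by (simp add: enumerate_0 Least_eq_0)
qed

lemma s_ex: "t \<in> N \<Longrightarrow> \<exists>n. s n = t" using enumerate_Ex N_inf by blast

lemma gap: assumes "t \<in> N" shows "t \<le> s n \<or> s (Suc n) \<le> t"
proof -
  obtain m where m: "s m = t" using s_ex assms by blast
  show ?thesis
  proof (cases "m \<le> n")
    case True thus ?thesis using m s_le by auto
  next
    case False hence "Suc n \<le> m" by simp
    thus ?thesis using m s_le by auto
  qed
qed

lemma rpow: "r ^ t = of_int (aa ^ t) / of_int (bb ^ t)"
proof -
  have h: "r ^ t = (of_int aa / of_int bb) ^ t" by (rule arg_cong[where f="\<lambda>x. x^t", OF r_eq])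
  show ?thesis unfolding h by (simp add: power_divide)
qed

lemma rpow_pos: "r ^ t > 0" using rpos by simp

lemma xx_alt: "xx n = of_int bb ^ (s (Suc n) - s n) * r ^ s (Suc n)"
proof -
  have e: "s (Suc n) = s n + (s (Suc n) - s n)" using s_less[of n "Suc n"] by simp
  have "of_int bb ^ (s (Suc n) - s n) * r ^ s (Suc n)
      = of_int bb ^ (s (Suc n) - s n) * r ^ (s (Suc n) - s n) * r ^ s n"
    by (subst e) (simp add: power_add)
  also have "of_int bb ^ (s (Suc n) - s n) * r ^ (s (Suc n) - s n) = of_int aa ^ (s (Suc n) - s n)"
    using b_pos by (simp add: rpow)
  finally show ?thesis by simp
qed

lemma xx_frac: "xx n = of_int (aa ^ s (Suc n)) / of_int (bb ^ s n)"
proof -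
  have e: "s (Suc n) = (s (Suc n) - s n) + s n" using s_less[of n "Suc n"] by simp
  show ?thesis by (subst e) (simp add: rpow power_add)
qed

lemma val_nonneg: "val E \<ge> 0"
  by (induction E) (auto intro: add_nonneg_nonneg simp: order.strict_implies_order[OF rpow_pos])

lemma val_pos: "E \<noteq> {#} \<Longrightarrow> val E > 0"
proof (induction E)
  case empty thus ?case by simp
next
  case (add x E) thus ?case using val_nonneg[of E] rpow_pos[of x] by simp
qed

lemma val_plus: "val (A + B) = val A + val B" by simp

lemma ival_val: "(\<forall>t\<in>#E. t \<le> K) \<Longrightarrow> of_int (ival K E) = val E * of_int bb ^ K"
proof (induction E)
  case empty thus ?case by simp
next
  case (add t E)
  have tK: "t \<le> K" using add.prems by simp
  have "of_int bb ^ K = (of_int bb ^ t * of_int bb ^ (K - t) :: rat)"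
    using tK by (simp add: power_add[symmetric])
  hence "r ^ t * of_int bb ^ K = of_int (aa ^ t * bb ^ (K - t))"
    using b_pos by (simp add: rpow)
  thus ?case using add by (simp add: distrib_right)
qed

lemma dvd_summ: "(\<And>t. t \<in># E \<Longrightarrow> (d::int) dvd f t) \<Longrightarrow> d dvd sum_mset (image_mset f E)"
  by (induction E) auto

lemma le_summ: "t \<in># (E::nat multiset) \<Longrightarrow> t \<le> sum_mset E"
  by (metis le_add1 sum_mset.remove)

end

context eps begin

lemma not_b_dvd: "\<not> bb dvd aa ^ k"
proof
  assume h: "bb dvd aa ^ k"
  have "coprime bb (aa ^ k)" using ab_coprime by (simp add: coprime_commute)
  hence "is_unit bb" using h by (meson coprime_common_divisor dvd_refl)
  thus False using b_gt1 by simp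
qed

lemma not_a_dvd: "\<not> aa dvd bb ^ k"
proof
  assume h: "aa dvd bb ^ k"
  have "coprime aa (bb ^ k)" using ab_coprime by simp
  hence "is_unit aa" using h by (meson coprime_common_divisor dvd_refl)
  thus False using a_gt1 by simp
qed

lemma not_a_dvd2: "\<not> aa ^ Suc k dvd aa ^ k * bb ^ m"
proof
  assume "aa ^ Suc k dvd aa ^ k * bb ^ m"
  hence "aa ^ k * aa dvd aa ^ k * bb ^ m" by (simp add: mult.commute)
  hence "aa dvd bb ^ m" using a_gt1 by (subst (asm) dvd_times_left_cancel_iff) auto
  thus False using not_a_dvd by blast
qed

lemma cop_cancel: "aa ^ k dvd y * bb ^ m \<Longrightarrow> aa ^ k dvd y"
  using ab_coprime by (simp add: coprime_dvd_mult_left_iff)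

lemma cop_cancel2: "bb ^ k dvd y * aa ^ m \<Longrightarrow> bb ^ k dvd y"
  using ab_coprime by (simp add: coprime_dvd_mult_left_iff coprime_commute)

lemma img_inv: "(\<forall>q\<in>#z. f (g q) = q) \<Longrightarrow> image_mset f (image_mset g z) = z"
  by (induction z) auto

lemma mset_repr:
  assumes "set_mset z \<subseteq> (\<lambda>k. r ^ k) ` N"
  shows "\<exists>E. set_mset E \<subseteq> N \<and> z = img E"
proof -
  define g where "g q = (SOME k. k \<in> N \<and> r ^ k = q)" for q
  have h: "\<forall>q\<in>#z. g q \<in> N \<and> r ^ g q = q"
  proof
    fix q assume "q \<in># z"
    hence "\<exists>k. k \<in> N \<and> r ^ k = q" using assms by auto
    thus "g q \<in> N \<and> r ^ g q = q" unfolding g_def by (rule someI_ex)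
  qed
  have A: "img (image_mset g z) = z" by (rule img_inv) (use h in auto)
  have B: "set_mset (image_mset g z) \<subseteq> N"
  proof
    fix k assume "k \<in> set_mset (image_mset g z)"
    then obtain q where "q \<in># z" "k = g q" by auto
    thus "k \<in> N" using h by blast
  qed
  show ?thesis
  proof (rule exI[of _ "image_mset g z"])
    show "set_mset (image_mset g z) \<subseteq> N \<and> z = img (image_mset g z)" using A B by simp
  qed
qed

lemma val_ge: "t \<in># E \<Longrightarrow> r ^ t \<le> val E"
proof -
  assume "t \<in># E"
  then obtain E' where "E = add_mset t E'" by (metis multi_member_split)
  thus ?thesis using val_nonneg[of E'] by simp
qed

lemma in_M: "set_mset E \<subseteq> N \<Longrightarrow> val E \<in> M"
  unfolding exp_puiseux_def by (rule CollectI, rule exI[of _ "img E"]) auto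

lemma M_repr: "q \<in> M \<Longrightarrow> \<exists>E. set_mset E \<subseteq> N \<and> q = val E"
  unfolding exp_puiseux_def using mset_repr by blast

lemma ival_single: "t \<le> K \<Longrightarrow> of_int (aa ^ t * bb ^ (K - t)) = r ^ t * of_int bb ^ K"
  using ival_val[of "{#t#}" K] by simp

lemma atom_gen: assumes "s0 \<in> N" shows "r ^ s0 \<in> atoms M"
proof -
  have inM: "r ^ s0 \<in> M" using in_M[of "{#s0#}"] assms by simp
  have F: "False" if uM: "u \<in> M" and vM: "v \<in> M" and uv: "r ^ s0 = u + v"
      and un: "u \<noteq> 0" and vn: "v \<noteq> 0" for u v
  proof -
    from M_repr[OF uM] obtain E1 where E1: "set_mset E1 \<subseteq> N" "u = val E1" by (elim exE conjE)
    from M_repr[OF vM] obtain E2 where E2: "set_mset E2 \<subseteq> N" "v = val E2" by (elim exE conjE)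
    have u0: "u > 0" using E1(2) un val_nonneg[of E1] by linarith
    have v0: "v > 0" using E2(2) vn val_nonneg[of E2] by linarith
    define E where "E = E1 + E2"
    have vE: "val E = r ^ s0" unfolding E_def using uv E1(2) E2(2) by simp
    have lt: "r ^ t < r ^ s0" if tE: "t \<in># E" for t
    proof (cases "t \<in># E1")
      case True
      have "r ^ t \<le> u" using val_ge[OF True] E1(2) by simp
      thus ?thesis using v0 uv by linarith
    next
      case False hence "t \<in># E2" using tE E_def by simp
      hence "r ^ t \<le> v" using val_ge E2(2) by simp
      thus ?thesis using u0 uv by linarith
    qed
    show False
    proof (cases "r > 1")
      case True
      have tl: "t < s0" if "t \<in># E" for t using lt[OF that] True by (simp add: power_strict_increasing_iff)
      have "of_int (ival s0 E) = val E * of_int bb ^ s0" by (rule ival_val) (meson tl less_imp_le)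
      also have "\<dots> = of_int (aa ^ s0)" using vE ival_single[of s0 s0] by simp
      finally have eq: "ival s0 E = aa ^ s0" by (simp only: of_int_eq_iff)
      have "bb dvd ival s0 E"
      proof (rule dvd_summ)
        fix t assume "t \<in># E"
        hence "s0 - t > 0" using tl by simp
        thus "bb dvd aa ^ t * bb ^ (s0 - t)" by (simp add: dvd_power)
      qed
      thus False using eq not_b_dvd by metis
    next
      case False
      hence r1: "r < 1" using r_ne1 by simp
      have tl: "s0 < t" if "t \<in># E" for t using lt[OF that] r1 rpos by (simp add: power_strict_decreasing_iff)
      define K where "K = s0 + sum_mset E"
      have tK: "\<forall>t\<in>#E. t \<le> K" using le_summ K_def by fastforce
      have "of_int (ival K E) = val E * of_int bb ^ K" by (rule ival_val) (use tK in auto)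
      also have "\<dots> = of_int (aa ^ s0 * bb ^ (K - s0))" using vE ival_single[of s0 K] K_def by simp
      finally have eq: "ival K E = aa ^ s0 * bb ^ (K - s0)" by (simp only: of_int_eq_iff)
      have "aa ^ Suc s0 dvd ival K E"
      proof (rule dvd_summ)
        fix t assume "t \<in># E"
        hence "s0 < t" by (rule tl)
        hence "Suc s0 \<le> t" by simp
        hence "aa ^ Suc s0 dvd aa ^ t" by (rule le_imp_power_dvd)
        thus "aa ^ Suc s0 dvd aa ^ t * bb ^ (K - t)" by simp
      qed
      thus False using eq not_a_dvd2 by metis
    qed
  qed
  show ?thesis unfolding atoms_def
  proof (intro CollectI conjI ballI impI)
    show "r ^ s0 \<in> M" by (rule inM)
    show "r ^ s0 \<noteq> 0" using rpow_pos[of s0] by (metis less_irrefl)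
    fix u v assume "u \<in> M" "v \<in> M" "r ^ s0 = u + v"
    thus "u = 0 \<or> v = 0" using F by blast
  qed
qed

lemma atoms_eq: "atoms M = (\<lambda>k. r ^ k) ` N"
proof
  show "(\<lambda>k. r ^ k) ` N \<subseteq> atoms M" using atom_gen by blast
next
  show "atoms M \<subseteq> (\<lambda>k. r ^ k) ` N"
  proof
    fix q assume q: "q \<in> atoms M"
    hence qM: "q \<in> M" and q0: "q \<noteq> 0" and at: "\<And>u v. u \<in> M \<Longrightarrow> v \<in> M \<Longrightarrow> q = u + v \<Longrightarrow> u = 0 \<or> v = 0"
      unfolding atoms_def by auto
    obtain E where E: "set_mset E \<subseteq> N" "q = val E" using M_repr qM by blast
    have "E \<noteq> {#}" using q0 E by auto
    then obtain t E' where tE: "E = add_mset t E'" by (metis multiset_cases)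
    show "q \<in> (\<lambda>k. r ^ k) ` N"
    proof (cases "E' = {#}")
      case True thus ?thesis using E tE by auto
    next
      case False
      have "r ^ t \<in> M" using in_M[of "{#t#}"] E tE by simp
      moreover have "val E' \<in> M" using in_M[of E'] E tE by simp
      moreover have "q = r ^ t + val E'" using E tE by simp
      ultimately have "r ^ t = 0 \<or> val E' = 0" using at by blast
      moreover have "r ^ t \<noteq> 0" using rpow_pos[of t] by (metis less_irrefl)
      moreover have "val E' \<noteq> 0" using val_pos[OF False] by simp
      ultimately show ?thesis by blast
    qed
  qed
qed

lemma fm_iff: "z \<in> factorization_monoid M \<longleftrightarrow> (\<exists>E. set_mset E \<subseteq> N \<and> z = img E)"
proof
  assume "z \<in> factorization_monoid M"
  hence "set_mset z \<subseteq> (\<lambda>k. r ^ k) ` N" unfolding factorization_monoid_def atoms_eq by simp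
  thus "\<exists>E. set_mset E \<subseteq> N \<and> z = img E" by (rule mset_repr)
next
  assume "\<exists>E. set_mset E \<subseteq> N \<and> z = img E"
  then obtain E where E: "set_mset E \<subseteq> N" "z = img E" by (elim exE conjE)
  have "set_mset z \<subseteq> (\<lambda>k. r ^ k) ` N" using E by auto
  thus "z \<in> factorization_monoid M" unfolding factorization_monoid_def atoms_eq by simp
qed

lemma fact_iff: "z \<in> factorizations M x \<longleftrightarrow> (\<exists>E. set_mset E \<subseteq> N \<and> z = img E \<and> val E = x)"
  unfolding factorizations_def fm_iff by auto

end

context eps begin

lemma xx_times: "sn = s n \<Longrightarrow> sn \<le> K \<Longrightarrow> xx n * of_int bb ^ K = of_int (aa ^ s (Suc n) * bb ^ (K - sn))"
proof -
  assume a: "sn = s n" "sn \<le> K"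
  have "(of_int bb ^ K :: rat) = of_int bb ^ sn * of_int bb ^ (K - sn)"
    using a by (simp add: power_add[symmetric])
  thus ?thesis using a b_pos by (simp add: xx_frac)
qed

lemma K1:
  assumes EN: "set_mset E \<subseteq> N" and vE: "val E = xx n" and t0: "t0 \<in># E" "t0 \<le> s n"
  shows "s n \<in># E \<and> (\<forall>t\<in>#E. t \<le> s n)"
proof -
  define sn where "sn = s n"
  define p where "p = s (Suc n)"
  have snp: "sn < p" using s_less[of n "Suc n"] sn_def p_def by simp
  define Elo where "Elo = filter_mset (\<lambda>t. t \<le> sn) E"
  define Ehi where "Ehi = filter_mset (\<lambda>t. \<not> t \<le> sn) E"
  have part: "E = Elo + Ehi" unfolding Elo_def Ehi_def by (rule multiset_partition)
  have hi_ge: "p \<le> t" if "t \<in># Ehi" for t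
  proof -
    have "t \<in> N" "\<not> t \<le> sn" using that EN unfolding Ehi_def by auto
    thus ?thesis using gap[of t n] sn_def p_def by auto
  qed
  define K where "K = p + sum_mset E"
  have tK: "\<forall>t\<in>#E. t \<le> K" using le_summ K_def by fastforce
  have snK: "sn \<le> K" using snp K_def by simp
  have "of_int (ival K E) = val E * of_int bb ^ K" by (rule ival_val[OF tK])
  also have "\<dots> = of_int (aa ^ p * bb ^ (K - sn))" using vE xx_times[OF sn_def snK] p_def by simp
  finally have eqK: "ival K E = aa ^ p * bb ^ (K - sn)" by (simp only: of_int_eq_iff)
  define A where "A = ival sn Elo"
  have loK: "\<forall>t\<in>#Elo. t \<le> sn" unfolding Elo_def by simp
  have Aval: "of_int A = val Elo * of_int bb ^ sn" unfolding A_def by (rule ival_val[OF loK])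
  have "of_int (ival K Elo) = val Elo * of_int bb ^ K" by (rule ival_val) (use loK snK in auto)
  also have "(of_int bb ^ K :: rat) = of_int bb ^ sn * of_int bb ^ (K - sn)"
    using snK by (simp add: power_add[symmetric])
  finally have "of_int (ival K Elo) = of_int A * (of_int bb ^ (K - sn) :: rat)" using Aval by simp
  hence "of_int (ival K Elo) = (of_int (A * bb ^ (K - sn)) :: rat)" by simp
  hence loeq: "ival K Elo = A * bb ^ (K - sn)" by (simp only: of_int_eq_iff)
  have spl: "ival K E = ival K Elo + ival K Ehi" by (subst part) simp
  have "aa ^ p dvd ival K Ehi"
  proof (rule dvd_summ)
    fix t assume "t \<in># Ehi"
    hence "aa ^ p dvd aa ^ t" using hi_ge by (simp add: le_imp_power_dvd)
    thus "aa ^ p dvd aa ^ t * bb ^ (K - t)" by simp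
  qed
  hence "aa ^ p dvd aa ^ p * bb ^ (K - sn) - ival K Ehi" by simp
  moreover have dd: "A * bb ^ (K - sn) = aa ^ p * bb ^ (K - sn) - ival K Ehi" using eqK spl loeq by linarith
  ultimately have "aa ^ p dvd A * bb ^ (K - sn)" by (simp only: dd)
  hence dv: "aa ^ p dvd A" by (rule cop_cancel)
  have Elo_ne: "Elo \<noteq> {#}" using t0 sn_def unfolding Elo_def by auto
  have "of_int A > (0::rat)" using Aval val_pos[OF Elo_ne] b_pos by simp
  hence Apos: "A > 0" by simp
  have "val Elo \<le> val E" using part val_nonneg[of Ehi] by (metis le_add_same_cancel1 val_plus)
  hence "val Elo \<le> xx n" using vE by simp
  hence "of_int A \<le> xx n * of_int bb ^ sn" using Aval b_pos by (simp add: mult_right_mono)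
  also have "\<dots> = of_int (aa ^ p)" using xx_times[OF sn_def, of sn] p_def by simp
  finally have "A \<le> aa ^ p" by (simp only: of_int_le_iff)
  with dv Apos have Aeq: "A = aa ^ p" using zdvd_imp_le by (simp add: order_antisym)
  have A2: "of_int A = xx n * of_int bb ^ sn" using Aeq xx_times[OF sn_def, of sn] p_def by simp
  have c0: "(of_int bb ^ sn :: rat) \<noteq> 0" using b_pos by simp
  have "val Elo * of_int bb ^ sn = xx n * of_int bb ^ sn" using Aval A2 by linarith
  hence "val Elo = xx n" using c0 b_pos by auto
  hence "val Elo = val E" using vE by simp
  hence "val Ehi = 0" using part by (metis add_cancel_right_right val_plus)
  hence "Ehi = {#}" using val_pos by fastforce
  hence allle: "\<forall>t\<in>#E. t \<le> sn"
  proof (intro ballI)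
    fix t assume e: "Ehi = {#}" and t: "t \<in># E"
    show "t \<le> sn"
    proof (rule ccontr)
      assume "\<not> t \<le> sn"
      hence "t \<in># Ehi" unfolding Ehi_def using t by simp
      thus False using e by simp
    qed
  qed
  have "sn \<in># E"
  proof (rule ccontr)
    assume nin: "sn \<notin># E"
    have "bb dvd A" unfolding A_def
    proof (rule dvd_summ)
      fix t assume "t \<in># Elo"
      hence "t < sn" using nin loK unfolding Elo_def by (metis le_neq_implies_less count_filter_mset in_countE le_eq_less_or_eq not_in_iff)
      hence "sn - t > 0" by simp
      thus "bb dvd aa ^ t * bb ^ (sn - t)" by (simp add: dvd_power)
    qed
    thus False using Aeq not_b_dvd by simp
  qed
  thus ?thesis using allle sn_def by simp
qed

lemma K2:
  assumes EN: "set_mset E \<subseteq> N" and vE: "val E = xx n" and hi: "\<forall>t\<in>#E. s n < t"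
  shows "s (Suc n) \<in># E"
proof (rule ccontr)
  assume nin: "s (Suc n) \<notin># E"
  define sn where "sn = s n"
  define p where "p = s (Suc n)"
  have snp: "sn < p" using s_less[of n "Suc n"] sn_def p_def by simp
  define K where "K = p + sum_mset E"
  have tK: "\<forall>t\<in>#E. t \<le> K" using le_summ K_def by fastforce
  have snK: "sn \<le> K" using snp K_def by simp
  have "of_int (ival K E) = val E * of_int bb ^ K" by (rule ival_val[OF tK])
  also have "\<dots> = of_int (aa ^ p * bb ^ (K - sn))" using vE xx_times[OF sn_def snK] p_def by simp
  finally have eqK: "ival K E = aa ^ p * bb ^ (K - sn)" by (simp only: of_int_eq_iff)
  have "aa ^ Suc p dvd ival K E"
  proof (rule dvd_summ)
    fix t assume tE: "t \<in># E"
    hence "t \<in> N" "sn < t" using EN hi sn_def by auto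
    hence "p \<le> t" using gap[of t n] sn_def p_def by auto
    moreover have "t \<noteq> p" using nin tE p_def by auto
    ultimately have "Suc p \<le> t" by simp
    hence "aa ^ Suc p dvd aa ^ t" by (rule le_imp_power_dvd)
    thus "aa ^ Suc p dvd aa ^ t * bb ^ (K - t)" by simp
  qed
  thus False using eqK not_a_dvd2 by metis
qed

end

context eps begin

definition low where "low n z \<longleftrightarrow> (\<forall>q\<in>#z. \<exists>t\<in>N. t \<le> s n \<and> q = r ^ t)"
definition high where "high n z \<longleftrightarrow> (\<forall>q\<in>#z. \<exists>t\<in>N. s (Suc n) \<le> t \<and> q = r ^ t)"

lemma F1:
  assumes "z \<in> factorizations M (xx n)"
  shows "(r ^ s n \<in># z \<and> low n z) \<or> (r ^ s (Suc n) \<in># z \<and> high n z)"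
proof -
  obtain E where E: "set_mset E \<subseteq> N" "z = img E" "val E = xx n" using assms fact_iff by blast
  show ?thesis
  proof (cases "\<exists>t0\<in>#E. t0 \<le> s n")
    case True
    then obtain t0 where "t0 \<in># E" "t0 \<le> s n" by blast
    from K1[OF E(1) E(3) this] have "s n \<in># E" "\<forall>t\<in>#E. t \<le> s n" by auto
    hence "r ^ s n \<in># z \<and> low n z" using E unfolding low_def by auto
    thus ?thesis ..
  next
    case False
    hence hi: "\<forall>t\<in>#E. s n < t" by auto
    from K2[OF E(1) E(3) hi] have "s (Suc n) \<in># E" .
    moreover have "\<forall>t\<in>#E. s (Suc n) \<le> t"
    proof
      fix t assume t: "t \<in># E"
      hence "t \<in> N" "s n < t" using hi E(1) by auto
      thus "s (Suc n) \<le> t" using gap[of t n] by auto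
    qed
    ultimately have "r ^ s (Suc n) \<in># z \<and> high n z" using E unfolding high_def by auto
    thus ?thesis ..
  qed
qed

lemma snp: "s n < s (Suc n)" using s_less by simp

lemma F2a: "z \<in> factorizations M (xx n) \<Longrightarrow> r ^ s n \<in># z \<Longrightarrow> low n z"
proof -
  assume z: "z \<in> factorizations M (xx n)" and q: "r ^ s n \<in># z"
  show "low n z"
  proof (rule ccontr)
    assume "\<not> low n z"
    hence "high n z" using F1[OF z] by blast
    then obtain t where "s (Suc n) \<le> t" "r ^ s n = r ^ t" using q unfolding high_def by blast
    thus False using r_inj snp[of n] by simp
  qed
qed

lemma F2b: "z \<in> factorizations M (xx n) \<Longrightarrow> r ^ s (Suc n) \<in># z \<Longrightarrow> high n z"
proof -
  assume z: "z \<in> factorizations M (xx n)" and q: "r ^ s (Suc n) \<in># z"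
  show "high n z"
  proof (rule ccontr)
    assume "\<not> high n z"
    hence "low n z" using F1[OF z] by blast
    then obtain t where "t \<le> s n" "r ^ s (Suc n) = r ^ t" using q unfolding low_def by blast
    thus False using r_inj snp[of n] by simp
  qed
qed

lemma F3: "low n z \<Longrightarrow> high n z' \<Longrightarrow> z \<inter># z' = {#}"
proof -
  assume l: "low n z" and h: "high n z'"
  have "q \<notin># z \<or> q \<notin># z'" for q
  proof (rule ccontr)
    assume "\<not> (q \<notin># z \<or> q \<notin># z')"
    hence "q \<in># z" "q \<in># z'" by auto
    then obtain t t' where "t \<le> s n" "q = r ^ t" "s (Suc n) \<le> t'" "q = r ^ t'"
      using l h unfolding low_def high_def by blast
    thus False using r_inj snp[of n] by simp
  qed
  thus ?thesis by (simp add: disjunct_not_in)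
qed

lemma closA:
  assumes "(z, z') \<in> (R_step M (xx n))\<^sup>*" "r ^ s n \<in># z"
  shows "r ^ s n \<in># z'"
  using assms
proof (induction rule: rtrancl_induct)
  case base thus ?case .
next
  case (step y w)
  hence yw: "y \<in> factorizations M (xx n)" "w \<in> factorizations M (xx n)" "y \<inter># w \<noteq> {#}"
    unfolding R_step_def by auto
  have ly: "low n y" using F2a[OF yw(1)] step by simp
  show ?case
  proof (rule ccontr)
    assume "r ^ s n \<notin># w"
    hence "high n w" using F1[OF yw(2)] by blast
    thus False using F3[OF ly] yw(3) by simp
  qed
qed

lemma closB:
  assumes "(z, z') \<in> (R_step M (xx n))\<^sup>*" "r ^ s (Suc n) \<in># z"
  shows "r ^ s (Suc n) \<in># z'"
  using assms
proof (induction rule: rtrancl_induct)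
  case base thus ?case .
next
  case (step y w)
  hence yw: "y \<in> factorizations M (xx n)" "w \<in> factorizations M (xx n)" "y \<inter># w \<noteq> {#}"
    unfolding R_step_def by auto
  have hy: "high n y" using F2b[OF yw(1)] step by simp
  show ?case
  proof (rule ccontr)
    assume "r ^ s (Suc n) \<notin># w"
    hence lw: "low n w" using F1[OF yw(2)] by blast
    show False using F3[OF lw hy] yw(3) by (metis subset_mset.inf_commute)
  qed
qed

lemma R_atom_iff:
  assumes "q \<in> atoms M"
  shows "z \<in> R_atom M x q \<longleftrightarrow> z \<in> factorizations M x \<and> q \<in># z"
proof
  assume "z \<in> R_atom M x q"
  thus "z \<in> factorizations M x \<and> q \<in># z" unfolding R_atom_def by auto
next
  assume h: "z \<in> factorizations M x \<and> q \<in># z"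
  have zf: "set_mset z \<subseteq> atoms M" using h unfolding factorizations_def factorization_monoid_def by simp
  have "set_mset (z - {#q#}) \<subseteq> set_mset z" by (auto dest: in_diffD)
  hence "set_mset (z - {#q#}) \<subseteq> atoms M" using zf by (rule order.trans)
  hence wfm: "z - {#q#} \<in> factorization_monoid M" unfolding factorization_monoid_def by simp
  have "\<exists>w. z = add_mset q w \<and> w \<in> factorization_monoid M"
    by (rule exI[of _ "z - {#q#}"]) (use wfm h in simp)
  thus "z \<in> R_atom M x q" unfolding R_atom_def using h by simp
qed

lemma class_A:
  assumes z: "z \<in> factorizations M (xx n)" "r ^ s n \<in># z"
  shows "R_class M (xx n) z = R_atom M (xx n) (r ^ s n)"
proof -
  have at: "r ^ s n \<in> atoms M" using atom_gen s_in by blast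
  show ?thesis
  proof (intro set_eqI iffI)
    fix w assume "w \<in> R_class M (xx n) z"
    hence "w \<in> factorizations M (xx n)" "(z, w) \<in> (R_step M (xx n))\<^sup>*"
      unfolding R_class_def R_related_def by auto
    thus "w \<in> R_atom M (xx n) (r ^ s n)" using closA z(2) R_atom_iff[OF at] by blast
  next
    fix w assume "w \<in> R_atom M (xx n) (r ^ s n)"
    hence w: "w \<in> factorizations M (xx n)" "r ^ s n \<in># w" using R_atom_iff[OF at] by auto
    hence "z \<inter># w \<noteq> {#}" using z(2) by (metis disjunct_not_in)
    hence "(z, w) \<in> R_step M (xx n)" using z w unfolding R_step_def by auto
    thus "w \<in> R_class M (xx n) z" using z w unfolding R_class_def R_related_def by auto
  qed
qed

lemma class_B:
  assumes z: "z \<in> factorizations M (xx n)" "r ^ s (Suc n) \<in># z"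
  shows "R_class M (xx n) z = R_atom M (xx n) (r ^ s (Suc n))"
proof -
  have at: "r ^ s (Suc n) \<in> atoms M" using atom_gen s_in by blast
  show ?thesis
  proof (intro set_eqI iffI)
    fix w assume "w \<in> R_class M (xx n) z"
    hence "w \<in> factorizations M (xx n)" "(z, w) \<in> (R_step M (xx n))\<^sup>*"
      unfolding R_class_def R_related_def by auto
    thus "w \<in> R_atom M (xx n) (r ^ s (Suc n))" using closB z(2) R_atom_iff[OF at] by blast
  next
    fix w assume "w \<in> R_atom M (xx n) (r ^ s (Suc n))"
    hence w: "w \<in> factorizations M (xx n)" "r ^ s (Suc n) \<in># w" using R_atom_iff[OF at] by auto
    hence "z \<inter># w \<noteq> {#}" using z(2) by (metis disjunct_not_in)
    hence "(z, w) \<in> R_step M (xx n)" using z w unfolding R_step_def by auto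
    thus "w \<in> R_class M (xx n) z" using z w unfolding R_class_def R_related_def by auto
  qed
qed

definition zA where "zA n = replicate_mset (nat aa ^ (s (Suc n) - s n)) (r ^ s n)"
definition zB where "zB n = replicate_mset (nat bb ^ (s (Suc n) - s n)) (r ^ s (Suc n))"

lemma zA_fact: "zA n \<in> factorizations M (xx n)"
proof -
  define E where "E = replicate_mset (nat aa ^ (s (Suc n) - s n)) (s n)"
  have "set_mset E \<subseteq> N" using s_in E_def by (cases "nat aa ^ (s (Suc n) - s n) = 0") auto
  moreover have "zA n = img E" unfolding E_def zA_def by simp
  moreover have "val E = xx n" unfolding E_def using a_gt1 by (simp add: sum_mset_replicate_mset)
  ultimately show ?thesis using fact_iff by blast
qed

lemma zB_fact: "zB n \<in> factorizations M (xx n)"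
proof -
  define E where "E = replicate_mset (nat bb ^ (s (Suc n) - s n)) (s (Suc n))"
  have "set_mset E \<subseteq> N" using s_in E_def by (cases "nat bb ^ (s (Suc n) - s n) = 0") auto
  moreover have "zB n = img E" unfolding E_def zB_def by simp
  moreover have "val E = xx n" unfolding E_def using b_gt1 xx_alt by (simp add: sum_mset_replicate_mset)
  ultimately show ?thesis using fact_iff by blast
qed

lemma zA_in: "r ^ s n \<in># zA n" unfolding zA_def using a_gt1 by simp
lemma zB_in: "r ^ s (Suc n) \<in># zB n" unfolding zB_def using b_gt1 by simp
lemma zA_nin: "r ^ s (Suc n) \<notin># zA n" unfolding zA_def using r_inj snp[of n] by auto

lemma part2: "R_classes M (xx n) = {R_atom M (xx n) (r ^ s n), R_atom M (xx n) (r ^ s (Suc n))}"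
proof (intro set_eqI iffI)
  fix C assume "C \<in> R_classes M (xx n)"
  then obtain z where z: "z \<in> factorizations M (xx n)" "C = R_class M (xx n) z"
    unfolding R_classes_def by blast
  thus "C \<in> {R_atom M (xx n) (r ^ s n), R_atom M (xx n) (r ^ s (Suc n))}"
    using F1[OF z(1)] class_A class_B by blast
next
  fix C assume "C \<in> {R_atom M (xx n) (r ^ s n), R_atom M (xx n) (r ^ s (Suc n))}"
  thus "C \<in> R_classes M (xx n)" unfolding R_classes_def
    using class_A[OF zA_fact zA_in] class_B[OF zB_fact zB_in] zA_fact zB_fact by force
qed

lemma xx_Betti: "xx n \<in> Betti M"
proof -
  have at: "r ^ s (Suc n) \<in> atoms M" using atom_gen s_in by blast
  obtain E where E: "set_mset E \<subseteq> N" "val E = xx n" using zA_fact[of n] fact_iff by blast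
  have "xx n \<in> M" using in_M[OF E(1)] E(2) by simp
  moreover have "R_atom M (xx n) (r ^ s n) \<noteq> R_atom M (xx n) (r ^ s (Suc n))"
  proof -
    have "zA n \<in> R_atom M (xx n) (r ^ s n)" using class_A[OF zA_fact zA_in] zA_fact
      unfolding R_class_def R_related_def by auto
    moreover have "zA n \<notin> R_atom M (xx n) (r ^ s (Suc n))" using R_atom_iff[OF at] zA_nin by blast
    ultimately show ?thesis by blast
  qed
  ultimately show ?thesis by (simp add: Betti_def part2) metis
qed

end

context eps begin

abbreviation mu :: "nat multiset \<Rightarrow> nat" where "mu E \<equiv> sum_mset (image_mset (\<lambda>t. nat aa ^ t) E)"

lemma R_step_sym: "(z, w) \<in> R_step M x \<Longrightarrow> (w, z) \<in> R_step M x"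
  unfolding R_step_def by (auto simp: subset_mset.inf_commute)

lemma img_fact: "set_mset E \<subseteq> N \<Longrightarrow> val E = x \<Longrightarrow> img E \<in> factorizations M x"
  using fact_iff by blast

lemma pushdown:
  assumes nx: "\<forall>n. x \<noteq> xx n" and EN: "set_mset E \<subseteq> N" and E'N: "set_mset E' \<subseteq> N"
    and vE: "val E = x" and vE': "val E' = x" and eE: "e \<in># E" and eE': "e \<notin># E'"
    and le: "\<forall>t\<in>#E + E'. t \<le> e"
  shows "\<exists>E1. set_mset E1 \<subseteq> N \<and> val E1 = x \<and> mu E1 < mu E \<and> (img E, img E1) \<in> R_step M x"
proof -
  have eN: "e \<in> N" using eE EN by auto
  obtain m where m: "s m = e" using s_ex[OF eN] by blast
  have "m \<noteq> 0"
  proof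
    assume "m = 0"
    hence e0: "e = 0" using m s_0 by simp
    have "E' = {#}"
    proof (rule ccontr)
      assume "E' \<noteq> {#}"
      then obtain t where "t \<in># E'" by (meson multiset_nonemptyE)
      moreover hence "t \<le> e" using le by auto
      ultimately show False using eE' e0 by simp
    qed
    hence "x = 0" using vE' by simp
    moreover have "E \<noteq> {#}" using eE by auto
    ultimately show False using val_pos[of E] vE by simp
  qed
  then obtain j where j: "m = Suc j" using not0_implies_Suc by blast
  define q where "q = s j"
  define d where "d = e - q"
  have qe: "q < e" using snp[of j] j m q_def by simp
  have ed: "e = d + q" using qe d_def by simp
  have dpos: "d > 0" using qe d_def by simp
  have below: "t \<le> q" if "t \<in> N" "t < e" for t using gap[of t j] that m j q_def by auto
  define c where "c = count E e"
  define E0 where "E0 = filter_mset (\<lambda>t. t \<noteq> e) E"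
  have partE: "E = replicate_mset c e + E0"
    unfolding c_def E0_def using multiset_partition[of E "\<lambda>t. t = e"] filter_eq_replicate_mset[where D=E and x=e]
    by simp
  have tE: "\<forall>t\<in>#E. t \<le> e" and tE': "\<forall>t\<in>#E'. t \<le> e" using le by auto
  have "of_int (ival e E) = x * of_int bb ^ e" using ival_val[OF tE] vE by simp
  also have "\<dots> = of_int (ival e E')" using ival_val[OF tE'] vE' by simp
  finally have ieq: "ival e E = ival e E'" by (simp only: of_int_eq_iff)
  have sp: "ival e E = of_nat c * aa ^ e + ival e E0" by (subst partE) (simp add: sum_mset_replicate_mset)
  have dv0: "bb ^ d dvd aa ^ t * bb ^ (e - t)" if "t \<in> N" "t \<le> e" "t \<noteq> e" for t
  proof -
    have "t \<le> q" using below that by simp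
    hence "d \<le> e - t" using d_def by simp
    hence "bb ^ d dvd bb ^ (e - t)" by (simp add: le_imp_power_dvd)
    thus ?thesis by simp
  qed
  have d1: "bb ^ d dvd ival e E0"
    by (rule dvd_summ) (use dv0 EN tE in \<open>auto simp: E0_def\<close>)
  have d2: "bb ^ d dvd ival e E'"
    by (rule dvd_summ) (use dv0 E'N tE' eE' in auto)
  have ceq: "of_nat c * aa ^ e = ival e E' - ival e E0" using ieq sp by linarith
  have "bb ^ d dvd ival e E' - ival e E0" using d2 d1 by (rule dvd_diff)
  hence "bb ^ d dvd of_nat c * aa ^ e" by (simp only: ceq)
  hence "bb ^ d dvd of_nat c" by (rule cop_cancel2)
  moreover have "c > 0" using eE c_def by simp
  ultimately have "bb ^ d \<le> of_nat c" using zdvd_imp_le by simp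
  hence cge: "nat bb ^ d \<le> c" using b_pos by (metis nat_int nat_le_iff of_nat_power int_nat_eq order_less_imp_le nat_mono)
  define R where "R = replicate_mset (nat bb ^ d) e"
  have RE: "R \<subseteq># E" using cge c_def R_def count_le_replicate_mset_subset_eq by metis
  have Eeq: "E = (E - R) + R" using RE by simp
  define E1 where "E1 = (E - R) + replicate_mset (nat aa ^ d) q"
  have E1N: "set_mset E1 \<subseteq> N"
  proof -
    have "set_mset (E - R) \<subseteq> N" using EN by (meson in_diffD subset_iff)
    moreover have "q \<in> N" using s_in q_def by simp
    ultimately show ?thesis unfolding E1_def by (cases "nat aa ^ d = 0") auto
  qed
  have xj: "xx j = of_int aa ^ d * r ^ q" using d_def q_def m j by simp
  have valR: "val R = xx j"
    unfolding R_def using xx_alt[of j] b_pos d_def q_def m j by (simp add: sum_mset_replicate_mset)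
  have valQ: "val (replicate_mset (nat aa ^ d) q) = xx j"
    using xj a_gt1 by (simp add: sum_mset_replicate_mset)
  have vE1: "val E1 = x"
  proof -
    have "val E = val (E - R) + val R" by (subst Eeq) simp
    thus ?thesis unfolding E1_def using valR valQ vE by simp
  qed
  have muE: "mu E = mu (E - R) + nat bb ^ d * nat aa ^ e" by (subst Eeq) (simp add: R_def sum_mset_replicate_mset)
  have muE1: "mu E1 = mu (E - R) + nat aa ^ e"
    unfolding E1_def by (simp add: sum_mset_replicate_mset ed power_add)
  have "nat aa ^ e > 0" using a_gt1 by simp
  moreover have "nat bb ^ d > 1"
  proof -
    have "nat bb > 1" using b_gt1 by simp
    thus ?thesis using dpos by (rule one_less_power)
  qed
  ultimately have "nat aa ^ e < nat bb ^ d * nat aa ^ e" by simp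
  hence mult: "mu E1 < mu E" using muE muE1 by simp
  have "E - R \<noteq> {#}"
  proof
    assume "E - R = {#}"
    hence "E = R" using Eeq by simp
    hence "x = xx j" using valR vE by simp
    thus False using nx by blast
  qed
  then obtain t where t: "t \<in># E - R" by (meson multiset_nonemptyE)
  hence "t \<in># E" "t \<in># E1" unfolding E1_def by (auto dest: in_diffD)
  hence "r ^ t \<in># img E" "r ^ t \<in># img E1" by auto
  hence "img E \<inter># img E1 \<noteq> {#}" by (metis disjunct_not_in)
  hence "(img E, img E1) \<in> R_step M x"
    unfolding R_step_def using img_fact[OF EN vE] img_fact[OF E1N vE1] by auto
  thus ?thesis using E1N vE1 mult by blast
qed

lemma connect:
  assumes nx: "\<forall>n. x \<noteq> xx n"
  shows "set_mset E \<subseteq> N \<Longrightarrow> set_mset E' \<subseteq> N \<Longrightarrow> val E = x \<Longrightarrow> val E' = x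
    \<Longrightarrow> (img E, img E') \<in> (R_step M x)\<^sup>*"
proof (induction "mu E + mu E'" arbitrary: E E' rule: less_induct)
  case less
  show ?case
  proof (cases "E = E'")
    case True thus ?thesis by simp
  next
    case neq: False
    show ?thesis
    proof (cases "\<exists>t. t \<in># E \<and> t \<in># E'")
      case True
      then obtain t where "t \<in># E" "t \<in># E'" by blast
      hence "r ^ t \<in># img E" "r ^ t \<in># img E'" by auto
      hence "img E \<inter># img E' \<noteq> {#}" by (metis disjunct_not_in)
      hence "(img E, img E') \<in> R_step M x"
        unfolding R_step_def using img_fact less.prems by auto
      thus ?thesis by simp
    next
      case disj: False
      define U where "U = set_mset E \<union> set_mset E'"
      have Ufin: "finite U" unfolding U_def by simp
      have Une: "U \<noteq> {}" using neq unfolding U_def by auto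
      define e where "e = Max U"
      have eU: "e \<in> U" using Max_in[OF Ufin Une] e_def by simp
      have le: "\<forall>t\<in>#E + E'. t \<le> e" using Max_ge[OF Ufin] e_def U_def by auto
      show ?thesis
      proof (cases "e \<in># E")
        case True
        hence "e \<notin># E'" using disj by blast
        from pushdown[OF nx less.prems True this le]
        obtain E1 where E1: "set_mset E1 \<subseteq> N" "val E1 = x" "mu E1 < mu E" "(img E, img E1) \<in> R_step M x"
          by blast
        have "(img E1, img E') \<in> (R_step M x)\<^sup>*"
          using less.hyps[of E1 E'] E1 less.prems by simp
        thus ?thesis using E1(4) by (rule converse_rtrancl_into_rtrancl[rotated])
      next
        case False
        hence eE': "e \<in># E'" using eU U_def by simp
        have le': "\<forall>t\<in>#E' + E. t \<le> e" using le by auto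
        from pushdown[OF nx less.prems(2) less.prems(1) less.prems(4) less.prems(3) eE' False le']
        obtain E1 where E1: "set_mset E1 \<subseteq> N" "val E1 = x" "mu E1 < mu E'" "(img E', img E1) \<in> R_step M x"
          by blast
        have "(img E, img E1) \<in> (R_step M x)\<^sup>*"
          using less.hyps[of E E1] E1 less.prems by simp
        moreover have "(img E1, img E') \<in> R_step M x" using R_step_sym[OF E1(4)] .
        ultimately show ?thesis by simp
      qed
    qed
  qed
qed

lemma class_all:
  assumes nx: "\<forall>n. x \<noteq> xx n" and z: "z \<in> factorizations M x"
  shows "R_class M x z = factorizations M x"
proof (intro set_eqI iffI)
  fix w assume "w \<in> R_class M x z"
  thus "w \<in> factorizations M x" unfolding R_class_def R_related_def by auto
next
  fix w assume w: "w \<in> factorizations M x"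
  obtain E where E: "set_mset E \<subseteq> N" "z = img E" "val E = x" using z fact_iff by blast
  obtain E' where E': "set_mset E' \<subseteq> N" "w = img E'" "val E' = x" using w fact_iff by blast
  have "(z, w) \<in> (R_step M x)\<^sup>*" using connect[OF nx E(1) E'(1) E(3) E'(3)] E E' by simp
  thus "w \<in> R_class M x z" using z w unfolding R_class_def R_related_def by auto
qed

lemma part1: "Betti M = {xx n | n. True}"
proof (intro set_eqI iffI)
  fix x assume "x \<in> {xx n | n. True}"
  thus "x \<in> Betti M" using xx_Betti by blast
next
  fix x assume x: "x \<in> Betti M"
  show "x \<in> {xx n | n. True}"
  proof (rule ccontr)
    assume "x \<notin> {xx n | n. True}"
    hence nx: "\<forall>n. x \<noteq> xx n" by blast
    from x obtain C1 C2 where "C1 \<in> R_classes M x" "C2 \<in> R_classes M x" "C1 \<noteq> C2"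
      unfolding Betti_def by blast
    thus False unfolding R_classes_def using class_all[OF nx] by auto
  qed
qed

end

theorem mainTheorem7:
  fixes r :: rat and N :: "nat set"
  assumes "numerical_monoid N"
    and "r > 0"
    and "r \<notin> \<nat>"
    and "numer r > 1"
  shows "Betti (exp_puiseux r N) =
           {of_int (numer r) ^ (enumerate N (Suc n) - enumerate N n) * r ^ (enumerate N n) | n. True}
         \<and> (\<forall>n x. x = of_int (numer r) ^ (enumerate N (Suc n) - enumerate N n) * r ^ (enumerate N n) \<longrightarrow>
           R_classes (exp_puiseux r N) x =
             {R_atom (exp_puiseux r N) x (r ^ enumerate N n),
              R_atom (exp_puiseux r N) x (r ^ enumerate N (Suc n))})"
proof -
  interpret eps r N using assms by unfold_locales
  show ?thesis using part1 part2 by blast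
qed

end
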